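(* Let $d\ge2$, $\delta\in[0,1/d)$, and let $N$ be a $d\times d$ $\delta$-upper bounded noise matrix. There exists a stochastic matrix $P$ such that $N\cdot P$ is $\delta'$-uniform, where $\delta'=f(\delta)$ with $$f(0)=0,\qquad f(\delta)=\left(d+\frac{1}{2}\cdot\frac{1}{(d-1)^2}\cdot\frac{1-d\delta}{\delta}\right)^{-1}\ \text{for }\delta\in(0,1/d).$$
   Context: A matrix is stochastic if its entries are non-negative and each row sums to $1$. For $\delta\in[0,1/d]$, a stochastic $d\times d$ matrix $N$ is: - $\delta$-upper bounded if $N_{i,i}\ge1-(d-1)\delta$ for all $i$ and $N_{i,j}\le\delta$ for all $i\ne j$; - $\delta$-uniform if $N_{i,i}=1-(d-1)\delta$ and $N_{i,j}=\delta$ for all $i\ne j$. *)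

theory Defs
  imports "HOL-Analysis.Analysis"
begin

text \<open>A real square matrix indexed by a finite type 'd (so d = CARD('d)).\<close>

definition stochastic :: "real^'d^'d \<Rightarrow> bool" where
  "stochastic M \<longleftrightarrow> (\<forall>i j. M $ i $ j \<ge> 0) \<and> (\<forall>i. (\<Sum>j\<in>UNIV. M $ i $ j) = 1)"

definition upper_bounded :: "real \<Rightarrow> real^'d^'d \<Rightarrow> bool" where
  "upper_bounded \<delta> N \<longleftrightarrow> stochastic N \<and>
     (\<forall>i. N $ i $ i \<ge> 1 - (real CARD('d) - 1) * \<delta>) \<and>
     (\<forall>i j. i \<noteq> j \<longrightarrow> N $ i $ j \<le> \<delta>)"

definition uniform_noise :: "real \<Rightarrow> real^'d^'d \<Rightarrow> bool" where
  "uniform_noise \<delta> N \<longleftrightarrow> stochastic N \<and>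
     (\<forall>i. N $ i $ i = 1 - (real CARD('d) - 1) * \<delta>) \<and>
     (\<forall>i j. i \<noteq> j \<longrightarrow> N $ i $ j = \<delta>)"

definition f_delta :: "nat \<Rightarrow> real \<Rightarrow> real" where
  "f_delta d \<delta> = (if \<delta> = 0 then 0 else
     inverse (real d + (1/2) * (1 / (real d - 1)^2) * ((1 - real d * \<delta>) / \<delta>)))"

end

theory Submission
  imports Defs
begin

lemma mmat_nonneg:
  fixes M :: "real^'d^'d" and x :: "real^'d"
  assumes off: "\<forall>i j. i \<noteq> j \<longrightarrow> M$i$j \<le> 0"
    and rs: "\<forall>i. (\<Sum>j\<in>UNIV. M$i$j) = 1"
    and y: "\<forall>i. (M *v x)$i \<ge> 0"
  shows "x$i \<ge> 0"
proof -
  have fin: "finite (range (\<lambda>j. x$j))" by simp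
  have "Min (range (\<lambda>j. x$j)) \<in> range (\<lambda>j. x$j)"
    by (rule Min_in) auto
  then obtain k where kdef: "x$k = Min (range (\<lambda>j. x$j))" by (metis rangeE)
  have kmin: "x$k \<le> x$j" for j
    unfolding kdef by (rule Min_le) auto
  have "(M *v x)$k - x$k = (\<Sum>j\<in>UNIV. M$k$j * (x$j - x$k))"
  proof -
    have "(\<Sum>j\<in>UNIV. M$k$j * (x$j - x$k)) = (\<Sum>j\<in>UNIV. M$k$j * x$j) - (\<Sum>j\<in>UNIV. M$k$j) * x$k"
      by (simp add: right_diff_distrib sum_subtractf sum_distrib_right)
    then show ?thesis using rs by (simp add: matrix_vector_mult_def)
  qed
  also have "\<dots> \<le> 0"
  proof (rule sum_nonpos)
    fix j :: 'd
    show "M$k$j * (x$j - x$k) \<le> 0"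
    proof (cases "j = k")
      case True then show ?thesis by simp
    next
      case False then show ?thesis using off kmin[of j]
        by (simp add: mult_nonpos_nonneg)
    qed
  qed
  finally have "x$k \<ge> 0" using y[rule_format, of k] by linarith
  then show ?thesis using kmin[of i] by linarith
qed

lemma mm_entry: "((A::real^'n^'m) ** (C::real^'p^'n))$i$j = (\<Sum>k\<in>UNIV. A$i$k * C$k$j)"
  by (simp add: matrix_matrix_mult_def)

theorem proposition16:
  fixes N :: "real^'d^'d" and \<delta> :: real
  assumes "CARD('d) \<ge> 2"
    and "0 \<le> \<delta>" and "\<delta> < 1 / real CARD('d)"
    and "upper_bounded \<delta> N"
  shows "\<exists>P :: real^'d^'d. stochastic P \<and> uniform_noise (f_delta CARD('d) \<delta>) (N ** P)"
proof -
  define d where "d = real CARD('d)"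
  define e where "e = f_delta CARD('d) \<delta>"
  have d2: "d \<ge> 2" using assms(1) unfolding d_def by simp
  have hd: "1 - d * \<delta> > 0" using assms(3) d2 unfolding d_def by (simp add: field_simps)
  have Nnn: "\<forall>i j. N$i$j \<ge> 0" and Nrs: "\<forall>i. (\<Sum>j\<in>UNIV. N$i$j) = 1"
    and Noff: "\<forall>i j. i \<noteq> j \<longrightarrow> N$i$j \<le> \<delta>"
    using assms(4) unfolding upper_bounded_def stochastic_def by auto
  define M :: "real^'d^'d" where "M = (\<chi> i j. (N$i$j - \<delta>) / (1 - d*\<delta>))"
  have Moff: "\<forall>i j. i \<noteq> j \<longrightarrow> M$i$j \<le> 0"
    using Noff hd unfolding M_def by (auto intro: divide_nonpos_pos)
  have Mrs: "\<forall>i. (\<Sum>j\<in>UNIV. M$i$j) = 1"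
  proof
    fix i
    have "(\<Sum>j\<in>UNIV. M$i$j) = (\<Sum>j\<in>UNIV. N$i$j - \<delta>) / (1 - d*\<delta>)"
      unfolding M_def by (simp add: sum_divide_distrib)
    also have "\<dots> = (1 - d*\<delta>) / (1 - d*\<delta>)"
      using Nrs by (simp add: sum_subtractf d_def)
    finally show "(\<Sum>j\<in>UNIV. M$i$j) = 1" using hd by simp
  qed
  have NM: "N$i$j = \<delta> + (1 - d*\<delta>) * M$i$j" for i j
    unfolding M_def using hd by simp
  have Minj: "\<forall>x. M *v x = 0 \<longrightarrow> x = 0"
  proof (intro allI impI)
    fix x :: "real^'d" assume x0: "M *v x = 0"
    have mx: "M *v (-x) = 0" using matrix_vector_mult_diff_distrib[of M 0 x] x0 by simp
    have "x$i \<ge> 0" for i by (rule mmat_nonneg[OF Moff Mrs]) (simp add: x0)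
    moreover have "(-x)$i \<ge> 0" for i
      by (rule mmat_nonneg[OF Moff Mrs]) (simp add: mx)
    ultimately show "x = 0" by (simp add: vec_eq_iff) (meson antisym neg_0_le_iff_le)
  qed
  then obtain B :: "real^'d^'d" where "B ** M = mat 1"
    using matrix_left_invertible_ker by blast
  then have MB: "M ** B = mat 1" using matrix_left_right_inverse by blast
  have Bnn: "B$i$j \<ge> 0" for i j
  proof -
    have "(M *v (\<chi> k. B$k$j))$l \<ge> 0" for l
    proof -
      have "(M *v (\<chi> k. B$k$j))$l = (M ** B)$l$j"
        by (simp add: matrix_vector_mult_def matrix_matrix_mult_def)
      then show ?thesis using MB by (simp add: mat_def)
    qed
    then have "(\<chi> k. B$k$j)$i \<ge> 0" by (intro mmat_nonneg[OF Moff Mrs]) auto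
    then show ?thesis by simp
  qed
  have Brs: "(\<Sum>j\<in>UNIV. B$i$j) = 1" for i
  proof -
    define u :: "real^'d" where "u = (\<chi> i. (\<Sum>j\<in>UNIV. B$i$j) - 1)"
    have "M *v u = 0"
    proof (simp add: vec_eq_iff, intro allI)
      fix l
      have "(M *v u)$l = (\<Sum>k\<in>UNIV. M$l$k * (\<Sum>j\<in>UNIV. B$k$j)) - (\<Sum>k\<in>UNIV. M$l$k)"
        unfolding u_def by (simp add: matrix_vector_mult_def right_diff_distrib sum_subtractf)
      also have "(\<Sum>k\<in>UNIV. M$l$k * (\<Sum>j\<in>UNIV. B$k$j)) = (\<Sum>j\<in>UNIV. (M**B)$l$j)"
        by (simp add: matrix_matrix_mult_def sum_distrib_left) (rule sum.swap)
      also have "\<dots> = 1" using MB by (simp add: mat_def)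
      finally show "(M *v u)$l = 0" using Mrs by simp
    qed
    then have "u = 0" using Minj by blast
    then show ?thesis unfolding u_def by (simp add: vec_eq_iff)
  qed
  define c where "c j = (\<Sum>i\<in>UNIV. B$i$j)" for j
  have cnn: "c j \<ge> 0" for j unfolding c_def by (simp add: Bnn sum_nonneg)
  have csum: "(\<Sum>j\<in>UNIV. c j) = d"
    unfolding c_def d_def by (subst sum.swap) (simp add: Brs)
  have cle: "c j \<le> d" for j
    unfolding csum[symmetric] by (rule member_le_sum) (auto simp: cnn)
  define \<kappa> where "\<kappa> = (1 - d*e) / (1 - d*\<delta>)"
  define w where "w j = e - \<delta> * \<kappa> * c j" for j
  have key: "e \<ge> 0 \<and> 1 - d*e \<ge> 0 \<and> \<delta> * \<kappa> * d \<le> e"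
  proof (cases "\<delta> = 0")
    case True
    then show ?thesis unfolding e_def f_delta_def by simp
  next
    case False
    then have dp: "\<delta> > 0" using assms(2) by simp
    define A where "A = (1/2) * (1 / (d - 1)^2) * ((1 - d * \<delta>) / \<delta>)"
    have d1: "(d-1)^2 > 0" using d2 by simp
    have Ap: "A > 0" unfolding A_def using hd dp d1 by simp
    have ee: "e = 1 / (d + A)" unfolding e_def f_delta_def A_def d_def using False
      by (simp add: inverse_eq_divide)
    have dA: "d + A > 0" using Ap d2 by simp
    have e0: "e \<ge> 0" using ee dA by simp
    have de: "1 - d*e = A / (d + A)" using ee dA by (simp add: field_simps)
    have "\<delta>*\<kappa>*d = \<delta> * d * A / ((1 - d*\<delta>) * (d + A))"
      unfolding \<kappa>_def de using hd dA by (simp add: field_simps)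
    also have "\<dots> = d * (\<delta> * A / (1 - d*\<delta>)) * (1 / (d + A))"
      using hd dA by (simp add: field_simps)
    also have "\<delta> * A / (1 - d*\<delta>) = 1 / (2*(d-1)^2)"
      unfolding A_def using hd dp d1 by (simp add: field_simps)
    also have "d * (1 / (2*(d-1)^2)) * (1 / (d + A)) = d / (2*(d-1)^2) * e"
      unfolding ee by simp
    also have "\<dots> \<le> 1 * e"
    proof (rule mult_right_mono[OF _ e0])
      have "(2*d-1)*(d-2) \<ge> 0" using d2 by (intro mult_nonneg_nonneg) auto
      moreover have "2*(d-1)^2 - d = (2*d-1)*(d-2)" by (simp add: power2_eq_square algebra_simps)
      ultimately have "d \<le> 2*(d-1)^2" by linarith
      then show "d / (2*(d-1)^2) \<le> 1" using d1 by simp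
    qed
    finally show ?thesis using e0 de Ap dA by simp
  qed
  have kap: "\<kappa> \<ge> 0" unfolding \<kappa>_def using key hd by simp
  have wnn: "w j \<ge> 0" for j
  proof -
    have "\<delta> * \<kappa> * c j \<le> \<delta> * \<kappa> * d"
      using cle[of j] kap assms(2) by (simp add: mult_left_mono)
    then show ?thesis unfolding w_def using key by linarith
  qed
  define Q :: "real^'d^'d" where "Q = (\<chi> i j. (if i = j then \<kappa> else 0) + w j)"
  have wsum: "(\<Sum>j\<in>UNIV. w j) = d*e - \<delta>*\<kappa>*d"
    unfolding w_def by (simp add: sum_subtractf sum_distrib_left[symmetric] csum d_def)
  have Qrs: "(\<Sum>j\<in>UNIV. Q$k$j) = 1" for k
  proof -
    have "(\<Sum>j\<in>UNIV. Q$k$j) = \<kappa> + (d*e - \<delta>*\<kappa>*d)"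
      unfolding Q_def by (simp add: sum.distrib wsum)
    also have "\<dots> = 1" unfolding \<kappa>_def using hd by (simp add: field_simps)
    finally show ?thesis .
  qed
  define P where "P = B ** Q"
  have Qnn: "Q$k$j \<ge> 0" for k j unfolding Q_def using kap wnn[of j] by simp
  have Pst: "stochastic P"
    unfolding stochastic_def
  proof (intro conjI allI)
    fix i j
    show "P$i$j \<ge> 0" unfolding P_def matrix_matrix_mult_def
      using Bnn Qnn by (simp add: sum_nonneg)
  next
    fix i
    have "(\<Sum>j\<in>UNIV. P$i$j) = (\<Sum>k\<in>UNIV. B$i$k * (\<Sum>j\<in>UNIV. Q$k$j))"
      unfolding P_def matrix_matrix_mult_def by (simp add: sum_distrib_left) (rule sum.swap)
    also have "\<dots> = 1" using Qrs Brs by simp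
    finally show "(\<Sum>j\<in>UNIV. P$i$j) = 1" .
  qed
  have NB: "(N ** B)$i$j = \<delta> * c j + (1 - d*\<delta>) * (if i = j then 1 else 0)" for i j
  proof -
    have "(N ** B)$i$j = (\<Sum>k\<in>UNIV. \<delta> * B$k$j + (1 - d*\<delta>) * (M$i$k * B$k$j))"
      unfolding matrix_matrix_mult_def by (simp add: NM algebra_simps)
    also have "\<dots> = \<delta> * c j + (1 - d*\<delta>) * (M ** B)$i$j"
      unfolding c_def matrix_matrix_mult_def by (simp add: sum.distrib sum_distrib_left)
    finally show ?thesis using MB by (simp add: mat_def)
  qed
  have NP: "(N ** P)$i$j = e + (if i = j then 1 - d*e else 0)" for i j
  proof -
    have "(N ** P)$i$j = ((N ** B) ** Q)$i$j" unfolding P_def by (simp add: matrix_mul_assoc)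
    also have "\<dots> = (\<Sum>k\<in>UNIV. (if k = j then \<delta> * c k * \<kappa> else 0) + \<delta> * c k * w j
         + (if i = k then (1 - d*\<delta>) * ((if k = j then \<kappa> else 0) + w j) else 0))"
      unfolding mm_entry[of "N ** B" Q] NB by (rule sum.cong) (auto simp: Q_def algebra_simps)
    also have "\<dots> = \<delta> * c j * \<kappa> + \<delta> * d * w j + (1 - d*\<delta>) * ((if i = j then \<kappa> else 0) + w j)"
    proof -
      have "(\<Sum>k\<in>UNIV. \<delta> * c k * w j) = \<delta> * d * w j"
        by (simp add: sum_distrib_right[symmetric] sum_distrib_left[symmetric] csum)
      then show ?thesis by (simp add: sum.distrib)
    qed
    also have "\<dots> = e + (if i = j then 1 - d*e else 0)"
    proof -
      have k1: "(1 - d*\<delta>) * \<kappa> = 1 - d*e" unfolding \<kappa>_def using hd by simp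
      have "\<delta> * c j * \<kappa> + \<delta> * d * w j + (1 - d*\<delta>) * w j = e"
        unfolding w_def by (simp add: algebra_simps)
      then show ?thesis using k1 by (cases "i = j") (simp_all add: algebra_simps)
    qed
    finally show ?thesis .
  qed
  have "uniform_noise e (N ** P)"
    unfolding uniform_noise_def stochastic_def
  proof (intro conjI allI impI)
    fix i j
    show "(N ** P)$i$j \<ge> 0" using NP[of i j] key by simp
  next
    fix i
    have "(\<Sum>j\<in>UNIV. (N ** P)$i$j) = (\<Sum>j\<in>UNIV. e + (if i = j then 1 - d*e else 0))"
      using NP by simp
    also have "\<dots> = 1" by (simp add: sum.distrib d_def)
    finally show "(\<Sum>j\<in>UNIV. (N ** P)$i$j) = 1" .
  next
    fix i show "(N ** P)$i$i = 1 - (real CARD('d) - 1) * e" using NP[of i i] unfolding d_def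
      by (simp add: algebra_simps)
  next
    fix i j :: 'd assume "i \<noteq> j" then show "(N ** P)$i$j = e" using NP[of i j] by simp
  qed
  then show ?thesis using Pst unfolding e_def by blast
qed

end
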